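(* Let $\rho$ be a density matrix on $\mathbb{C}^d$ with spectral decomposition $\rho=\sum_{i=1}^d p_i|i\rangle\langle i|$ (eigenvalues listed with multiplicity, including zeros), and $H$ a Hermitian operator on $\mathbb{C}^d$. Let $S=\{p_i+p_j:p_i\neq p_j\}$ and $$J=\{\mu\in S:\ \langle i|H|j\rangle=0\ \text{for all } i,j \text{ with } p_i\neq p_j \text{ and } p_i+p_j=\mu\}.$$ Then $n^*=\mathcal{N}[S]-\mathcal{N}[J]$, where $\mathcal{N}[\cdot]$ denotes the number of distinct elements of a set.
   Context: Let $\mathcal{R}_\rho(X)=\frac12(\rho X+X\rho)$ and define the Krylov subspaces $\mathcal{K}_n=\mathrm{span}\{i[\rho,H],\mathcal{R}_\rho(i[\rho,H]),\dots,\mathcal{R}_\rho^{n-1}(i[\rho,H])\}$ for $n\ge1$. These are nested and eventually stabilize; $n^*$ denotes the dimension of the stabilized subspace $\bigcup_n\mathcal{K}_n$. Equivalently, when $i[\rho,H]\ne0$, $\dim\mathcal{K}_n=n$ for $n\le n^*$ and $n^*$ is the smallest $n$ with $\mathcal{K}_n=\mathcal{K}_{n+1}$. *)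

theory Defs
  imports "HOL-Analysis.Analysis"
begin

text \<open>Operators on C^d are d x d complex matrices, d = CARD('n).
  The space of such matrices is regarded as a real vector space; the Krylov
  subspaces consist of Hermitian operators, and their real and complex dimensions agree.\<close>

definition cinner :: "complex^'n \<Rightarrow> complex^'n \<Rightarrow> complex" where
  "cinner v w = (\<Sum>a\<in>UNIV. cnj (v$a) * w$a)"

definition adjoint_mat :: "complex^'n^'n \<Rightarrow> complex^'n^'n" where
  "adjoint_mat A = (\<chi> a b. cnj (A$b$a))"

definition hermitian :: "complex^'n^'n \<Rightarrow> bool" where
  "hermitian A \<longleftrightarrow> adjoint_mat A = A"

definition density_matrix :: "complex^'n^'n \<Rightarrow> bool" where
  "density_matrix \<rho> \<longleftrightarrow> hermitian \<rho> \<and>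
     (\<forall>v. 0 \<le> Re (cinner v (\<rho> *v v))) \<and> (\<Sum>a\<in>UNIV. \<rho>$a$a) = 1"

definition orthonormal_family :: "('n \<Rightarrow> complex^'n) \<Rightarrow> bool" where
  "orthonormal_family e \<longleftrightarrow> (\<forall>i j. cinner (e i) (e j) = (if i = j then 1 else 0))"

definition outer :: "complex^'n \<Rightarrow> complex^'n \<Rightarrow> complex^'n^'n" where
  "outer v w = (\<chi> a b. v$a * cnj (w$b))"

definition cscale :: "complex \<Rightarrow> complex^'n^'n \<Rightarrow> complex^'n^'n" where
  "cscale c M = (\<chi> a b. c * M$a$b)"

definition melem :: "complex^'n^'n \<Rightarrow> ('n \<Rightarrow> complex^'n) \<Rightarrow> 'n \<Rightarrow> 'n \<Rightarrow> complex" where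
  "melem H e i j = cinner (e i) (H *v e j)"

definition Rop :: "complex^'n^'n \<Rightarrow> complex^'n^'n \<Rightarrow> complex^'n^'n" where
  "Rop \<rho> X = (1/2::real) *\<^sub>R (\<rho> ** X + X ** \<rho>)"

definition icomm :: "complex^'n^'n \<Rightarrow> complex^'n^'n \<Rightarrow> complex^'n^'n" where
  "icomm \<rho> H = cscale \<i> (\<rho> ** H - H ** \<rho>)"

definition krylov :: "complex^'n^'n \<Rightarrow> complex^'n^'n \<Rightarrow> nat \<Rightarrow> (complex^'n^'n) set" where
  "krylov \<rho> H n = span {(Rop \<rho> ^^ k) (icomm \<rho> H) | k. k < n}"

definition nstar :: "complex^'n^'n \<Rightarrow> complex^'n^'n \<Rightarrow> nat" where
  "nstar \<rho> H = dim (\<Union>n\<in>{1..}. krylov \<rho> H n)"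

end

theory Submission
  imports Defs
begin


definition Tm :: "('n \<Rightarrow> 'n \<Rightarrow> real) \<Rightarrow> complex^'n^'n \<Rightarrow> complex^'n^'n" where
  "Tm l X = (\<chi> a b. complex_of_real (l a b) * X$a$b)"

lemma linear_Tm: "linear (Tm l)"
  by (rule linearI) (auto simp: Tm_def vec_eq_iff algebra_simps scaleR_conv_of_real)

definition wv :: "('n \<Rightarrow> 'n \<Rightarrow> real) \<Rightarrow> complex^'n^'n \<Rightarrow> nat \<Rightarrow> complex^'n^'n" where
  "wv l Y k = (\<chi> a b. complex_of_real (l a b ^ k) * Y$a$b)"

definition Gm :: "('n \<Rightarrow> 'n \<Rightarrow> real) \<Rightarrow> complex^'n^'n \<Rightarrow> real set \<Rightarrow> complex^'n^'n" where
  "Gm l Y N = (\<chi> a b. complex_of_real (\<Prod>\<nu>\<in>N. (l a b - \<nu>)) * Y$a$b)"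

definition Zm :: "('n \<Rightarrow> 'n \<Rightarrow> real) \<Rightarrow> complex^'n^'n \<Rightarrow> real \<Rightarrow> complex^'n^'n" where
  "Zm l Y \<mu> = (\<chi> a b. if l a b = \<mu> then Y$a$b else 0)"

lemma Tm_wv: "Tm l (wv l Y k) = wv l Y (Suc k)"
  by (simp add: Tm_def wv_def vec_eq_iff mult.assoc)

lemma Gm_span:
  assumes "finite N"
  shows "Gm l Y N \<in> span {wv l Y k | k. k < card N + 1}"
  using assms
proof (induction N rule: finite_induct)
  case empty
  have "Gm l Y {} = wv l Y 0" by (simp add: Gm_def wv_def)
  then show ?case by (auto intro: span_base)
next
  case (insert \<nu> N)
  have eq: "Gm l Y (insert \<nu> N) = Tm l (Gm l Y N) - \<nu> *\<^sub>R Gm l Y N"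
  proof -
    { fix a b
      have "complex_of_real (\<Prod>x\<in>insert \<nu> N. (l a b - x)) * Y$a$b
        = complex_of_real (l a b) * (complex_of_real (\<Prod>x\<in>N. (l a b - x)) * Y$a$b)
          - \<nu> *\<^sub>R (complex_of_real (\<Prod>x\<in>N. (l a b - x)) * Y$a$b)"
        using insert by (simp add: scaleR_conv_of_real algebra_simps)
    }
    then show ?thesis by (simp add: Gm_def Tm_def vec_eq_iff)
  qed
  have sub: "span {wv l Y k | k. k < card N + 1} \<subseteq> span {wv l Y k | k. k < card (insert \<nu> N) + 1}"
    using insert by (intro span_mono) auto
  have "Tm l (Gm l Y N) \<in> Tm l ` span {wv l Y k | k. k < card N + 1}"
    using insert by auto
  also have "\<dots> = span (Tm l ` {wv l Y k | k. k < card N + 1})"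
    by (simp add: span_linear_image[OF linear_Tm])
  also have "\<dots> \<subseteq> span {wv l Y k | k. k < card (insert \<nu> N) + 1}"
    using insert by (intro span_mono) (auto simp: Tm_wv)
  finally have "Tm l (Gm l Y N) \<in> span {wv l Y k | k. k < card (insert \<nu> N) + 1}" .
  moreover have "\<nu> *\<^sub>R Gm l Y N \<in> span {wv l Y k | k. k < card (insert \<nu> N) + 1}"
    using insert sub by (intro span_mul) auto
  ultimately show ?case unfolding eq by (rule span_diff)
qed

lemma Zm_in_span:
  assumes M: "M = {l a b | a b. Y$a$b \<noteq> 0}" and mu: "\<mu> \<in> M"
  shows "Zm l Y \<mu> \<in> span {wv l Y k | k. k < card M + 1}"
proof -
  have fM: "finite M" unfolding M
    using finite_image_set2[of "\<lambda>a. True" "\<lambda>b. True" l] 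
    by (rule finite_subset[rotated]) auto
  define c where "c = (\<Prod>\<nu>\<in>M-{\<mu>}. (\<mu> - \<nu>))"
  have c0: "c \<noteq> 0" unfolding c_def using fM by (auto simp: prod_zero_iff)
  have "Gm l Y (M - {\<mu>}) = c *\<^sub>R Zm l Y \<mu>"
  proof -
    { fix a b
      have "complex_of_real (\<Prod>\<nu>\<in>M-{\<mu>}. (l a b - \<nu>)) * Y$a$b
          = c *\<^sub>R (if l a b = \<mu> then Y$a$b else 0)"
      proof (cases "Y$a$b = 0")
        case False
        then have "l a b \<in> M" unfolding M by auto
        then show ?thesis using fM
          by (cases "l a b = \<mu>") (auto simp: c_def prod_zero_iff scaleR_conv_of_real)
      qed simp }
    then show ?thesis by (simp add: Gm_def Zm_def vec_eq_iff)
  qed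
  then have "Zm l Y \<mu> = (1/c) *\<^sub>R Gm l Y (M - {\<mu>})" using c0 by simp
  moreover have "Gm l Y (M - {\<mu>}) \<in> span {wv l Y k | k. k < card M + 1}"
  proof -
    have "Gm l Y (M - {\<mu>}) \<in> span {wv l Y k | k. k < card (M - {\<mu>}) + 1}"
      using fM by (intro Gm_span) auto
    moreover have "card (M - {\<mu>}) \<le> card M" using fM by (intro card_mono) auto
    moreover have "span {wv l Y k | k. k < card (M - {\<mu>}) + 1} \<subseteq> span {wv l Y k | k. k < card M + 1}"
      using calculation(2) by (intro span_mono) auto
    ultimately show ?thesis by blast
  qed
  ultimately show ?thesis by (simp add: span_mul)
qed

lemma finite_M: "finite {l a b | a b. (Y::complex^'n^'n)$a$b \<noteq> 0}"
  using finite_image_set2[of "\<lambda>a. True" "\<lambda>b. True" l]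
  by (rule finite_subset[rotated]) auto

lemma wv_sum:
  assumes M: "M = {l a b | a b. Y$a$b \<noteq> 0}"
  shows "wv l Y k = (\<Sum>\<mu>\<in>M. (\<mu>^k) *\<^sub>R Zm l Y \<mu>)"
proof -
  have fM: "finite M" unfolding M by (rule finite_M)
  { fix a b
    have "complex_of_real (l a b ^ k) * Y$a$b = (\<Sum>\<mu>\<in>M. (\<mu>^k) *\<^sub>R (if l a b = \<mu> then Y$a$b else 0))"
    proof (cases "Y$a$b = 0")
      case False
      then have "l a b \<in> M" unfolding M by auto
      have "(\<Sum>\<mu>\<in>M. (\<mu>^k) *\<^sub>R (if l a b = \<mu> then Y$a$b else 0))
          = (\<Sum>\<mu>\<in>M. if \<mu> = l a b then (l a b^k) *\<^sub>R Y$a$b else 0)"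
        by (rule sum.cong) auto
      then show ?thesis using fM \<open>l a b \<in> M\<close>
        by (simp add: scaleR_conv_of_real)
    qed (simp add: if_distrib[of "\<lambda>x. _ *\<^sub>R x"] cong: if_cong) }
  then show ?thesis by (simp add: wv_def Zm_def vec_eq_iff sum_component)
qed

lemma Zm_nz:
  assumes "\<mu> \<in> {l a b | a b. Y$a$b \<noteq> 0}"
  obtains a b where "l a b = \<mu>" "Y$a$b \<noteq> 0" "Zm l Y \<mu> $ a $ b \<noteq> 0"
  using assms by (auto simp: Zm_def)

lemma Zm_inj:
  assumes M: "M = {l a b | a b. Y$a$b \<noteq> 0}"
  shows "inj_on (Zm l Y) M"
proof
  fix x y assume "x \<in> M" "y \<in> M" and eq: "Zm l Y x = Zm l Y y"
  then obtain a b where "l a b = x" "Y$a$b \<noteq> 0" using M by auto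
  then show "x = y" using eq by (auto simp: Zm_def vec_eq_iff) (metis)
qed

lemma Zm_indep:
  assumes M: "M = {l a b | a b. Y$a$b \<noteq> 0}"
  shows "independent (Zm l Y ` M)"
proof
  have fM: "finite M" unfolding M by (rule finite_M)
  assume "dependent (Zm l Y ` M)"
  then obtain u where u: "\<exists>v\<in>Zm l Y ` M. u v \<noteq> 0" "(\<Sum>v\<in>Zm l Y ` M. u v *\<^sub>R v) = 0"
    using fM by (auto simp: real_vector.dependent_finite)
  then obtain \<mu>0 where mu0: "\<mu>0 \<in> M" "u (Zm l Y \<mu>0) \<noteq> 0" by auto
  then obtain a b where ab: "l a b = \<mu>0" "Y$a$b \<noteq> 0" using M by auto
  have "(\<Sum>\<mu>\<in>M. u (Zm l Y \<mu>) *\<^sub>R Zm l Y \<mu>) = 0"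
    using u(2) by (simp add: sum.reindex[OF Zm_inj[OF M]])
  then have "(\<Sum>\<mu>\<in>M. u (Zm l Y \<mu>) *\<^sub>R Zm l Y \<mu>) $ a $ b = 0" by simp
  then have "(\<Sum>\<mu>\<in>M. u (Zm l Y \<mu>) *\<^sub>R (if l a b = \<mu> then Y$a$b else 0)) = 0"
    by (simp add: sum_component Zm_def)
  then have "u (Zm l Y \<mu>0) *\<^sub>R Y$a$b = 0"
    using fM mu0 ab by (simp add: if_distrib[of "\<lambda>x. _ *\<^sub>R x"] sum.delta' cong: if_cong)
  then show False using mu0 ab by simp
qed

lemma core_dim:
  assumes M: "M = {l a b | a b. Y$a$b \<noteq> 0}"
  shows "(\<Union>n\<in>{1..}. span {wv l Y k | k. k < n}) = span (Zm l Y ` M)"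
    and "dim (span (Zm l Y ` M)) = card M"
proof -
  have A: "span {wv l Y k | k. k < n} \<subseteq> span (Zm l Y ` M)" for n
    by (rule span_minimal) (auto simp: wv_sum[OF M] intro!: span_sum span_mul span_base[OF imageI])
  have B: "span (Zm l Y ` M) \<subseteq> span {wv l Y k | k. k < card M + 1}"
    using Zm_in_span[OF M] by (intro span_minimal) auto
  show "(\<Union>n\<in>{1..}. span {wv l Y k | k. k < n}) = span (Zm l Y ` M)"
  proof
    show "(\<Union>n\<in>{1..}. span {wv l Y k | k. k < n}) \<subseteq> span (Zm l Y ` M)" using A by blast
    show "span (Zm l Y ` M) \<subseteq> (\<Union>n\<in>{1..}. span {wv l Y k | k. k < n})"
      using B by (intro subset_trans[OF B]) (rule UN_upper, simp)
  qed
  show "dim (span (Zm l Y ` M)) = card M"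
    by (simp add: dim_eq_card_independent[OF Zm_indep[OF M]] card_image[OF Zm_inj[OF M]])
qed



lemma mm_radd: "((B + C) ** (A::'a::comm_ring_1^_^_)) = (B ** A) + (C ** A)"
  by (simp add: matrix_matrix_mult_def vec_eq_iff sum.distrib[symmetric] algebra_simps)
lemma mm_lsub: "((A::'a::comm_ring_1^_^_) ** (B - C)) = (A ** B) - (A ** C)"
  by (simp add: matrix_matrix_mult_def vec_eq_iff sum_subtractf[symmetric] algebra_simps)
lemma mm_rsub: "((B - C) ** (A::'a::comm_ring_1^_^_)) = (B ** A) - (C ** A)"
  by (simp add: matrix_matrix_mult_def vec_eq_iff sum_subtractf[symmetric] algebra_simps)
lemma cscale_l: "cscale c (A ** B) = cscale c A ** B"
  by (simp add: cscale_def matrix_matrix_mult_def vec_eq_iff sum_distrib_left mult_ac)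
lemma cscale_r: "cscale c (A ** B) = A ** cscale c B"
  by (simp add: cscale_def matrix_matrix_mult_def vec_eq_iff sum_distrib_left mult_ac)

lemma diag_l: "((\<chi> i j. if i = j then d i else 0) ** (A::'a::comm_ring_1^'n^'n)) $ i $ j = d i * A$i$j"
  by (simp add: matrix_matrix_mult_def if_distrib if_distribR sum.delta cong: if_cong)
lemma diag_r: "((A::'a::comm_ring_1^'n^'n) ** (\<chi> i j. if i = j then d i else 0)) $ i $ j = A$i$j * d j"
  by (simp add: matrix_matrix_mult_def if_distrib if_distribR sum.delta' cong: if_cong)

lemma sandwich_linear: "linear (\<lambda>X. (A::complex^'n^'n) ** X ** B)"
  by (rule linearI) (simp_all add: matrix_add_ldistrib mm_radd matrix_scalar_ac scalar_matrix_assoc)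



theorem mainTheorem3:
  fixes \<rho> H :: "complex^'n^'n" and p :: "'n \<Rightarrow> real" and e :: "'n \<Rightarrow> complex^'n"
  assumes "density_matrix \<rho>"
    and "hermitian H"
    and "orthonormal_family e"
    and "\<rho> = (\<Sum>i\<in>UNIV. cscale (complex_of_real (p i)) (outer (e i) (e i)))"
  shows "nstar \<rho> H =
    card {p i + p j | i j. p i \<noteq> p j}
    - card {\<mu> \<in> {p i + p j | i j. p i \<noteq> p j}.
              \<forall>i j. p i \<noteq> p j \<and> p i + p j = \<mu> \<longrightarrow> melem H e i j = 0}"
proof -
  define U :: "complex^'n^'n" where "U = (\<chi> a i. e i $ a)"
  define Ua where "Ua = adjoint_mat U"
  define D :: "complex^'n^'n" where "D = (\<chi> i j. if i = j then complex_of_real (p i) else 0)"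
  define \<Phi> where "\<Phi> = (\<lambda>X. Ua ** X ** U)"
  define \<Psi> where "\<Psi> = (\<lambda>X. U ** X ** Ua)"
  have UaU: "Ua ** U = mat 1"
    using assms(3) by (simp add: Ua_def U_def adjoint_mat_def matrix_matrix_mult_def mat_def
        vec_eq_iff orthonormal_family_def cinner_def)
  have UUa: "U ** Ua = mat 1" using UaU matrix_left_right_inverse by blast
  have rho: "\<rho> = U ** D ** Ua"
  proof -
    have 1: "(U ** D) $ a $ j = e j $ a * p j" for a j
      unfolding D_def by (subst diag_r) (simp add: U_def)
    have "(U ** D ** Ua) $ a $ b = (\<Sum>j\<in>UNIV. (U ** D) $ a $ j * Ua $ j $ b)" for a b
      by (simp add: matrix_matrix_mult_def)
    then show ?thesis using assms(4)
      by (simp add: 1 vec_eq_iff sum_component cscale_def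
          outer_def Ua_def adjoint_mat_def mult_ac, simp add: U_def)
  qed
  have PhiPsi: "\<Phi> (\<Psi> X) = X" for X
    by (simp add: \<Phi>_def \<Psi>_def matrix_mul_assoc) (metis UaU matrix_mul_assoc matrix_mul_lid matrix_mul_rid)
  have PsiPhi: "\<Psi> (\<Phi> X) = X" for X
    by (simp add: \<Phi>_def \<Psi>_def matrix_mul_assoc) (metis UUa matrix_mul_assoc matrix_mul_lid matrix_mul_rid)
  have Phil: "\<Phi> (\<rho> ** X) = D ** \<Phi> X" for X
    unfolding \<Phi>_def rho by (metis UaU matrix_mul_assoc matrix_mul_lid matrix_mul_rid)
  have Phir: "\<Phi> (X ** \<rho>) = \<Phi> X ** D" for X
    unfolding \<Phi>_def rho by (metis UaU matrix_mul_assoc matrix_mul_lid matrix_mul_rid)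
  have Phi_lin: "linear \<Phi>" unfolding \<Phi>_def by (rule sandwich_linear)
  have Psi_lin: "linear \<Psi>" unfolding \<Psi>_def by (rule sandwich_linear)
  have Phi_melem: "\<Phi> X $ a $ b = melem X e a b" for X a b
    by (simp add: \<Phi>_def melem_def cinner_def matrix_matrix_mult_def matrix_vector_mult_def
        Ua_def U_def adjoint_mat_def sum_distrib_left sum_distrib_right mult_ac)
      (rule sum.swap)
  define l where "l = (\<lambda>a b. (p a + p b) / 2)"
  define Y where "Y = \<Phi> (icomm \<rho> H)"
  have Yab: "Y $ a $ b = \<i> * (complex_of_real (p a) - complex_of_real (p b)) * melem H e a b" for a b
  proof -
    have "Y = cscale \<i> (D ** \<Phi> H - \<Phi> H ** D)"
      unfolding Y_def icomm_def
      unfolding \<Phi>_def cscale_r[symmetric] cscale_l[symmetric] mm_lsub mm_rsub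
        Phil[unfolded \<Phi>_def] Phir[unfolded \<Phi>_def] ..
    then show ?thesis
      by (simp add: cscale_def D_def diag_l diag_r Phi_melem algebra_simps)
  qed
  have PhiRop: "\<Phi> (Rop \<rho> X) = Tm l (\<Phi> X)" for X
  proof -
    have "\<Phi> (Rop \<rho> X) = (1/2::real) *\<^sub>R (D ** \<Phi> X + \<Phi> X ** D)"
      unfolding Rop_def using Phi_lin by (simp add: linear_scale linear_add Phil Phir)
    then have "\<Phi> (Rop \<rho> X) $ i $ j = (1/2::real) *\<^sub>R (complex_of_real (p i) * \<Phi> X $ i $ j + \<Phi> X $ i $ j * complex_of_real (p j))" for i j
      by (simp add: D_def diag_l diag_r)
    then show ?thesis
      by (simp add: vec_eq_iff Tm_def l_def scaleR_conv_of_real algebra_simps)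
  qed
  have iter: "(Rop \<rho> ^^ k) (icomm \<rho> H) = \<Psi> (wv l Y k)" for k
  proof (induction k)
    case 0
    have "wv l Y 0 = Y" by (simp add: wv_def)
    then show ?case by (simp add: Y_def PsiPhi)
  next
    case (Suc k)
    have "(Rop \<rho> ^^ Suc k) (icomm \<rho> H) = \<Psi> (\<Phi> (Rop \<rho> (\<Psi> (wv l Y k))))"
      using Suc by (simp add: PsiPhi)
    also have "\<dots> = \<Psi> (wv l Y (Suc k))" by (simp add: PhiRop PhiPsi Tm_wv)
    finally show ?case .
  qed
  have kry: "krylov \<rho> H n = \<Psi> ` span {wv l Y k | k. k < n}" for n
  proof -
    have "{(Rop \<rho> ^^ k) (icomm \<rho> H) | k. k < n} = \<Psi> ` {wv l Y k | k. k < n}"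
      by (auto simp: iter)
    then show ?thesis unfolding krylov_def by (simp add: span_linear_image[OF Psi_lin])
  qed
  define M where "M = {l a b | a b. Y$a$b \<noteq> 0}"
  have "nstar \<rho> H = dim (\<Psi> ` (\<Union>n\<in>{1..}. span {wv l Y k | k. k < n}))"
    unfolding nstar_def kry by (simp add: image_UN)
  also have "\<dots> = dim (\<Psi> ` span (Zm l Y ` M))" using core_dim(1)[OF M_def] by simp
  also have "\<dots> = dim (span (Zm l Y ` M))"
    by (rule dim_image_eq[OF Psi_lin]) (metis PhiPsi inj_onI)
  also have "\<dots> = card M" by (rule core_dim(2)[OF M_def])
  finally have n: "nstar \<rho> H = card M" .
  define S where "S = {p i + p j | i j. p i \<noteq> p j}"
  define J where "J = {\<mu> \<in> S. \<forall>i j. p i \<noteq> p j \<and> p i + p j = \<mu> \<longrightarrow> melem H e i j = 0}"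
  have fS: "finite S" unfolding S_def
    using finite_image_set2[of "\<lambda>a. True" "\<lambda>b. True" "\<lambda>i j. p i + p j"]
    by (rule finite_subset[rotated]) auto
  have "M = (\<lambda>x. x / 2) ` (S - J)"
    by (auto simp: M_def S_def J_def Yab l_def image_def) (metis)+
  then have "card M = card (S - J)" by (simp add: card_image inj_on_def)
  also have "\<dots> = card S - card J"
    by (rule card_Diff_subset) (use fS in \<open>auto simp: J_def intro: finite_subset\<close>)
  finally show ?thesis using n unfolding S_def J_def by simp
qed

end
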